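(* Let $A$ be a $d\times d$ reclusive matrix and $\vec{c}\in\mathbb{Z}^{d}$. Then $\|A\vec{c}\|_{\infty}\leq 1$ if and only if $\vec{c}=\langle c_{j}\rangle_{j=1}^{d}$ is a weak-alt-1 sequence.
   Context: A $d\times d$ matrix $A=(a_{ij})$ is reclusive if $a_{ij}=0$ for $i>j$, $a_{ii}=1$ for all $i$, and $a_{ij}>a_{ik}>0$ for all $i\le j<k$. A finite sequence $\langle c_i\rangle_{i=1}^n$ is alt-1 if it equals $\langle(-1)^i\rangle_{i=1}^n$ or $\langle(-1)^{i+1}\rangle_{i=1}^n$; it is weak-alt-1 if every term is $-1$, $0$ or $1$ and the subsequence of its nonzero terms is alt-1 (the empty sequence counts as alt-1, so the all-zero sequence is weak-alt-1). *)

theory Defs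
  imports Main "HOL-Analysis.Analysis"
begin

text \<open>A d x d real matrix is represented as a function on indices {1..d} x {1..d}.\<close>
definition reclusive :: "nat \<Rightarrow> (nat \<Rightarrow> nat \<Rightarrow> real) \<Rightarrow> bool" where
  "reclusive d A \<longleftrightarrow>
     (\<forall>i\<in>{1..d}. \<forall>j\<in>{1..d}. i > j \<longrightarrow> A i j = 0) \<and>
     (\<forall>i\<in>{1..d}. A i i = 1) \<and>
     (\<forall>i\<in>{1..d}. \<forall>j\<in>{1..d}. \<forall>k\<in>{1..d}. i \<le> j \<and> j < k \<longrightarrow> A i j > A i k \<and> A i k > 0)"

text \<open>Finite sequences <c_1,...,c_n> as lists; index i (1-based) is position i-1.\<close>
definition alt1 :: "int list \<Rightarrow> bool" where
  "alt1 cs \<longleftrightarrow>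
     cs = map (\<lambda>i. (-1) ^ i) [1..<length cs + 1] \<or>
     cs = map (\<lambda>i. (-1) ^ (i + 1)) [1..<length cs + 1]"

definition weak_alt1 :: "int list \<Rightarrow> bool" where
  "weak_alt1 cs \<longleftrightarrow> set cs \<subseteq> {-1, 0, 1} \<and> alt1 (filter (\<lambda>x. x \<noteq> 0) cs)"

definition matvec_sup_norm :: "nat \<Rightarrow> (nat \<Rightarrow> nat \<Rightarrow> real) \<Rightarrow> (nat \<Rightarrow> int) \<Rightarrow> real" where
  "matvec_sup_norm d A c = Max (insert 0 ((\<lambda>i. \<bar>\<Sum>j=1..d. A i j * of_int (c j)\<bar>) ` {1..d}))"

end

theory Submission
  imports Defs
begin

lemma e1: "length xs = n \<Longrightarrow> xs = map f [Suc 0..<Suc n] \<longleftrightarrow> (\<forall>k<n. xs!k = f (Suc k))"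
  by (simp add: list_eq_iff_nth_eq del: upt_Suc)

lemma alt1_nth: "alt1 xs \<longleftrightarrow> (\<exists>s\<in>{-1,1::int}. \<forall>k<length xs. xs!k = s*(-1)^k)"
proof -
  have u: "[1..<length xs + 1] = [Suc 0..<Suc (length xs)]" by simp
  have p1: "(-1::int)^(Suc k) = (-1)*(-1)^k" and p2: "(-1::int)^(Suc k+1) = 1*(-1)^k" for k by simp_all
  have "alt1 xs \<longleftrightarrow> (\<forall>k<length xs. xs!k = (-1)*(-1)^k) \<or> (\<forall>k<length xs. xs!k = 1*(-1)^k)"
    unfolding alt1_def u e1[OF refl] p1 p2 by (rule refl)
  then show ?thesis by auto
qed

lemma alt1_Nil[simp]: "alt1 []" unfolding alt1_def by simp

lemma alt1_Cons: "alt1 (x#ys) \<longleftrightarrow> x\<in>{-1,1} \<and> alt1 ys \<and> (ys\<noteq>[] \<longrightarrow> hd ys = -x)"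
proof
  assume "alt1 (x#ys)"
  then obtain s where s: "s\<in>{-1,1::int}" "\<forall>k<length (x#ys). (x#ys)!k = s*(-1)^k"
    unfolding alt1_nth by blast
  have x: "x = s" using s(2) by (metis length_Cons nth_Cons_0 power_0 mult_1_right zero_less_Suc)
  have ys: "\<forall>k<length ys. ys!k = (-s)*(-1)^k"
  proof (intro allI impI)
    fix k assume "k<length ys"
    then have "(x#ys)!Suc k = s*(-1)^Suc k" using s(2) by auto
    then show "ys!k = (-s)*(-1)^k" by simp
  qed
  have "alt1 ys" unfolding alt1_nth using s(1) ys by (intro bexI[of _ "-s"]) auto
  moreover have "ys\<noteq>[] \<longrightarrow> hd ys = -x" using ys x by (auto simp: hd_conv_nth)
  ultimately show "x\<in>{-1,1} \<and> alt1 ys \<and> (ys\<noteq>[] \<longrightarrow> hd ys = -x)" using s x by auto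
next
  assume a: "x\<in>{-1,1} \<and> alt1 ys \<and> (ys\<noteq>[] \<longrightarrow> hd ys = -x)"
  then obtain s where s: "s\<in>{-1,1::int}" "\<forall>k<length ys. ys!k = s*(-1)^k"
    unfolding alt1_nth by blast
  have ys: "\<forall>k<length ys. ys!k = (-x)*(-1)^k"
  proof (cases "ys = []")
    case False
    then have "s = -x" using a s(2) by (auto simp: hd_conv_nth)
    then show ?thesis using s by auto
  qed simp
  show "alt1 (x#ys)" unfolding alt1_nth
  proof (intro bexI[of _ x] allI impI)
    fix k assume "k < length (x#ys)"
    then show "(x#ys)!k = x*(-1)^k" using ys by (cases k) auto
  qed (use a in auto)
qed

definition fnz :: "int list \<Rightarrow> int" where
  "fnz xs = (case filter (\<lambda>x. x\<noteq>0) xs of [] \<Rightarrow> 0 | y#_ \<Rightarrow> y)"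

lemma fnz_Nil[simp]: "fnz [] = 0" by (simp add: fnz_def)
lemma fnz_Cons[simp]: "fnz (x#xs) = (if x \<noteq> 0 then x else fnz xs)" by (simp add: fnz_def)

lemma weak_alt1_Nil[simp]: "weak_alt1 []" by (simp add: weak_alt1_def)

lemma fnz_set: "set xs \<subseteq> {-1,0,1} \<Longrightarrow> fnz xs \<in> {-1,0,1}"
  by (induction xs) auto

lemma fnz_hd: "filter (\<lambda>x. x\<noteq>0) xs \<noteq> [] \<Longrightarrow> hd (filter (\<lambda>x. x\<noteq>0) xs) = fnz xs"
  by (induction xs) auto

lemma fnz_zero: "fnz xs = 0 \<longleftrightarrow> filter (\<lambda>x. x\<noteq>0) xs = []"
  by (induction xs) auto

lemma weak_alt1_Cons: "weak_alt1 (x#xs) \<longleftrightarrow> x\<in>{-1,0,1} \<and> weak_alt1 xs \<and> (x\<noteq>0 \<longrightarrow> fnz xs = 0 \<or> fnz xs = -x)"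
proof (cases "x = 0")
  case True then show ?thesis by (simp add: weak_alt1_def)
next
  case False
  then show ?thesis unfolding weak_alt1_def using fnz_hd[of xs] fnz_zero[of xs]
    by (auto simp: alt1_Cons)
qed

lemma alt_sum:
  fixes b :: "nat \<Rightarrow> real"
  assumes "weak_alt1 xs" "\<forall>j k. j<k \<longrightarrow> k<length xs \<longrightarrow> b k < b j" "\<forall>j<length xs. 0 < b j"
  shows "(fnz xs = 0 \<and> (\<Sum>j<length xs. b j * of_int (xs!j)) = 0) \<or>
         (fnz xs \<in> {-1,1} \<and> 0 < of_int (fnz xs) * (\<Sum>j<length xs. b j * of_int (xs!j)) \<and>
            of_int (fnz xs) * (\<Sum>j<length xs. b j * of_int (xs!j)) \<le> b 0)"
  using assms
proof (induction xs arbitrary: b)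
  case Nil
  then show ?case by simp
next
  case (Cons x xs)
  define S where "S = (\<Sum>j<length xs. b (Suc j) * of_int (xs!j))"
  have sum: "(\<Sum>j<length (x#xs). b j * of_int ((x#xs)!j)) = b 0 * of_int x + S"
    unfolding S_def length_Cons sum.lessThan_Suc_shift by simp
  have w: "x\<in>{-1,0,1}" "weak_alt1 xs" "x\<noteq>0 \<longrightarrow> fnz xs = 0 \<or> fnz xs = -x"
    using Cons.prems(1) weak_alt1_Cons by auto
  have IH: "(fnz xs = 0 \<and> S = 0) \<or> (fnz xs \<in> {-1,1} \<and> 0 < of_int (fnz xs) * S \<and> of_int (fnz xs) * S \<le> b 1)"
    using Cons.IH[of "\<lambda>j. b (Suc j)"] w(2) Cons.prems(2,3) unfolding S_def by fastforce
  have b1: "xs \<noteq> [] \<Longrightarrow> b 1 < b 0" using Cons.prems(2) by auto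
  have b0: "0 < b 0" using Cons.prems(3) by auto
  have ne: "fnz xs \<noteq> 0 \<Longrightarrow> xs \<noteq> []" by auto
  show ?case unfolding sum
  proof (cases "x = 0")
    case True
    then show "(fnz (x#xs) = 0 \<and> b 0 * of_int x + S = 0) \<or>
         (fnz (x#xs) \<in> {-1,1} \<and> 0 < of_int (fnz (x#xs)) * (b 0 * of_int x + S) \<and>
            of_int (fnz (x#xs)) * (b 0 * of_int x + S) \<le> b 0)"
      using IH b1 ne by auto
  next
    case False
    then have x: "x = 1 \<or> x = -1" using w(1) by auto
    show "(fnz (x#xs) = 0 \<and> b 0 * of_int x + S = 0) \<or>
         (fnz (x#xs) \<in> {-1,1} \<and> 0 < of_int (fnz (x#xs)) * (b 0 * of_int x + S) \<and>
            of_int (fnz (x#xs)) * (b 0 * of_int x + S) \<le> b 0)"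
      using x IH b1 ne b0 w(3) by (auto simp: algebra_simps)
  qed
qed


lemma step_arith:
  fixes x h :: int and S :: real
  assumes "\<bar>of_int x + S\<bar> \<le> 1"
    "(h=0 \<and> S=0) \<or> (h\<in>{-1,1} \<and> 0 < of_int h*S \<and> of_int h*S < 1)"
  shows "x\<in>{-1,0,1} \<and> (x\<noteq>0 \<longrightarrow> h=0 \<or> h=-x)"
proof -
  consider "h = 0" "S = 0" | "h = 1" "0 < S" "S < 1" | "h = -1" "0 < -S" "-S < 1"
    using assms(2) by auto
  then show ?thesis
  proof cases
    case 1
    then have "of_int x \<le> (1::real)" "of_int x \<ge> (-1::real)" using assms(1) by auto
    then have "x \<le> 1" "x \<ge> -1" by simp_all
    then show ?thesis using 1 by auto
  next
    case 2
    then have "of_int x < (1::real)" "of_int x > (-2::real)" using assms(1) by auto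
    then have "x < 1" "x > -2" by simp_all
    then show ?thesis using 2 by auto
  next
    case 3
    then have "of_int x > (-1::real)" "of_int x < (2::real)" using assms(1) by auto
    then have "x > -1" "x < 2" by simp_all
    then show ?thesis using 3 by auto
  qed
qed

lemma weak_alt1_drop: "weak_alt1 xs \<Longrightarrow> weak_alt1 (drop n xs)"
  by (induction xs arbitrary: n) (auto simp: weak_alt1_Cons drop_Cons split: nat.splits)

theorem mainTheorem18:
  fixes d :: nat and A :: "nat \<Rightarrow> nat \<Rightarrow> real" and c :: "nat \<Rightarrow> int"
  assumes "reclusive d A"
  shows "matvec_sup_norm d A c \<le> 1 \<longleftrightarrow> weak_alt1 (map c [1..<d+1])"
proof -
  define R where "R i = (\<Sum>j=1..d. A i j * of_int (c j))" for i
  define xs where "xs i = map c [i..<d+1]" for i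
  have A0: "\<And>i j. i\<in>{1..d} \<Longrightarrow> j\<in>{1..d} \<Longrightarrow> i > j \<Longrightarrow> A i j = 0"
    and A1: "\<And>i. i\<in>{1..d} \<Longrightarrow> A i i = 1"
    and Ad: "\<And>i j k. i\<in>{1..d} \<Longrightarrow> j\<in>{1..d} \<Longrightarrow> k\<in>{1..d} \<Longrightarrow> i \<le> j \<Longrightarrow> j < k \<Longrightarrow> A i j > A i k \<and> A i k > 0"
    using assms unfolding reclusive_def by blast+
  have norm: "matvec_sup_norm d A c \<le> 1 \<longleftrightarrow> (\<forall>i\<in>{1..d}. \<bar>R i\<bar> \<le> 1)"
    unfolding matvec_sup_norm_def R_def by auto
  have Rsum: "R i = (\<Sum>k<length (xs i). A i (i+k) * of_int (xs i ! k))" if i: "i\<in>{1..d}" for i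
  proof -
    have "R i = (\<Sum>j=i..d. A i j * of_int (c j))"
      unfolding R_def
      by (rule sum.mono_neutral_right) (use i A0 in auto)
    also have "\<dots> = (\<Sum>j=i..<d+1. A i j * of_int (c j))"
      by (rule sum.cong) auto
    also have "\<dots> = (\<Sum>k=0..<d+1-i. A i (i+k) * of_int (c (i+k)))"
      by (subst sum.atLeastLessThan_shift_0) (simp add: comp_def)
    also have "\<dots> = (\<Sum>k<length (xs i). A i (i+k) * of_int (xs i ! k))"
      unfolding xs_def using i by (intro sum.cong) (auto simp del: upt_Suc)
    finally show ?thesis .
  qed
  have Bdec: "\<forall>j k. j<k \<longrightarrow> k<length (xs i) \<longrightarrow> A i (i+k) < A i (i+j)" if i: "i\<in>{1..d}" for i
    using Ad[of i] i unfolding xs_def by auto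
  have Bpos: "\<forall>j<length (xs i). 0 < A i (i+j)" if i: "i\<in>{1..d}" for i
  proof (intro allI impI)
    fix j assume j: "j < length (xs i)"
    show "0 < A i (i+j)"
    proof (cases j)
      case 0 then show ?thesis using A1 i by simp
    next
      case (Suc m) then show ?thesis using Ad[of i i "i+j"] i j unfolding xs_def by auto
    qed
  qed
  show ?thesis unfolding norm
  proof
    assume w: "weak_alt1 (map c [1..<d+1])"
    show "\<forall>i\<in>{1..d}. \<bar>R i\<bar> \<le> 1"
    proof
      fix i assume i: "i\<in>{1..d}"
      have "xs i = drop (i-1) (map c [1..<d+1])" unfolding xs_def using i by (simp add: drop_map)
      then have wi: "weak_alt1 (xs i)" using weak_alt1_drop w by simp
      from alt_sum[OF wi Bdec[OF i] Bpos[OF i]] A1[OF i]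
      show "\<bar>R i\<bar> \<le> 1" unfolding Rsum[OF i] by (auto simp: abs_if split: if_splits)
    qed
  next
    assume r: "\<forall>i\<in>{1..d}. \<bar>R i\<bar> \<le> 1"
    have "k \<le> d \<Longrightarrow> weak_alt1 (xs (d+1-k))" for k
    proof (induction k)
      case 0 then show ?case unfolding xs_def by simp
    next
      case (Suc k)
      define i where "i = d - k"
      have i: "i\<in>{1..d}" using Suc.prems unfolding i_def by auto
      have wt: "weak_alt1 (xs (i+1))" using Suc unfolding i_def by (simp add: Suc_diff_le)
      have xsi: "xs i = c i # xs (i+1)" unfolding xs_def using i by (simp add: upt_conv_Cons del: upt_Suc)
      define S where "S = (\<Sum>k<length (xs (i+1)). A i (i+Suc k) * of_int (xs (i+1) ! k))"
      have RS: "R i = of_int (c i) + S"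
        unfolding Rsum[OF i] xsi S_def length_Cons sum.lessThan_Suc_shift using A1[OF i] by simp
      have dec: "\<forall>j k. j<k \<longrightarrow> k<length (xs (i+1)) \<longrightarrow> A i (i+Suc k) < A i (i+Suc j)"
      proof (intro allI impI)
        fix j k assume "j<k" "k<length (xs (i+1))"
        then show "A i (i+Suc k) < A i (i+Suc j)" using Bdec[OF i] unfolding xsi
          by (metis Suc_mono length_Cons)
      qed
      have pos: "\<forall>j<length (xs (i+1)). 0 < A i (i+Suc j)"
        using Bpos[OF i] unfolding xsi by auto
      have lt1: "xs (i+1) \<noteq> [] \<Longrightarrow> A i (i+Suc 0) < 1"
      proof -
        assume "xs (i+1) \<noteq> []"
        then have "1 < length (xs i)" unfolding xsi by simp
        then have "A i (i+1) < A i (i+0)" using Bdec[OF i] by blast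
        then show ?thesis using A1[OF i] by simp
      qed
      have ne: "fnz (xs (i+1)) \<noteq> 0 \<Longrightarrow> xs (i+1) \<noteq> []" by auto
      have H: "(fnz (xs (i+1)) = 0 \<and> S = 0) \<or> (fnz (xs (i+1)) \<in> {-1,1} \<and> 0 < of_int (fnz (xs (i+1))) * S \<and> of_int (fnz (xs (i+1))) * S < 1)"
        using alt_sum[OF wt, of "\<lambda>k. A i (i+Suc k)", OF dec pos] lt1 ne unfolding S_def by fastforce
      have "\<bar>of_int (c i) + S\<bar> \<le> 1" using r i RS by metis
      from step_arith[OF this H]
      have "weak_alt1 (c i # xs (i+1))" using wt by (auto simp: weak_alt1_Cons)
      then show ?case using xsi unfolding i_def using Suc.prems by (simp add: Suc_diff_le)
    qed
    from this[of d] show "weak_alt1 (map c [1..<d+1])" unfolding xs_def by simp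
  qed
qed

end
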